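(* The multi-ideal $\mathcal{L}_\varepsilon$ is not represented by the injective tensor norm $\varepsilon$.
   Context: All spaces are over a fixed field $\mathbb{K}=\mathbb{R}$ or $\mathbb{C}$. $\mathcal{L}(E_1,\ldots,E_n;F)$ is the space of continuous $n$-linear maps with the sup norm, and $E'$ is the dual of $E$. $\varepsilon=(\varepsilon_n)$ is the injective tensor norm, $\varepsilon_n(\sum_j x^{(1)}_j\otimes\cdots\otimes x^{(n)}_j)=\sup_{\varphi_l\in B_{E_l'}}|\sum_j\varphi_1(x_j^{(1)})\cdots\varphi_n(x_j^{(n)})|$. $\mathcal{L}_\varepsilon(E_1,\ldots,E_n;F)$ is the space of $A\in\mathcal{L}(E_1,\ldots,E_n;F)$ whose linearization $A_L\colon(E_1\otimes\cdots\otimes E_n,\varepsilon_n)\to F$, $A_L(x_1\otimes\cdots\otimes x_n)=A(x_1,\ldots,x_n)$, is continuous. Its norm is $\|A\|=\|A_L\|$. A multi-ideal $\mathcal M$ is represented by a tensor norm $\beta$ if for every $n$ and all Banach spaces $E_1,\ldots,E_n,F$ the canonical map $\varphi\colon\mathcal{M}(E_1,\ldots,E_n;F')\to(E_1\otimes\cdots\otimes E_n\otimes F,\beta_{n+1})'$, $\varphi(T)(x_1\otimes\cdots\otimes x_n\otimes y)=T(x_1,\ldots,x_n)(y)$, is an isometric isomorphism onto. *)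

theory Defs
  imports Complex_Main
begin

text \<open>
  Banach spaces are modelled as closed linear subspaces of the space of bounded
  sequences nat => 'k with the sup norm (every separable Banach space is of this form
  up to isometric isomorphism).  Tuples (x_1,...,x_k) are functions nat => vector,
  only the indices l < k being relevant.  Finite tensors sum_j x_j^(1) (x) ... (x) x_j^(k)
  are represented by families xs j l (j < m, l < k).
\<close>

type_synonym 'k vec = "nat \<Rightarrow> 'k"

definition nrm :: "'k::real_normed_field vec \<Rightarrow> real" where
  "nrm x = (SUP i. norm (x i))"

definition banach_sub :: "'k::real_normed_field vec set \<Rightarrow> bool" where
  "banach_sub E \<longleftrightarrow>
     (\<forall>x\<in>E. bdd_above (range (\<lambda>i. norm (x i)))) \<and>
     (\<lambda>i. 0) \<in> E \<and>
     (\<forall>x\<in>E. \<forall>y\<in>E. (\<lambda>i. x i + y i) \<in> E) \<and>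
     (\<forall>c. \<forall>x\<in>E. (\<lambda>i. c * x i) \<in> E) \<and>
     (\<forall>u. (\<forall>k. u k \<in> E) \<and>
          (\<forall>e>0. \<exists>N. \<forall>p\<ge>N. \<forall>q\<ge>N. nrm (\<lambda>i. u p i - u q i) < e) \<longrightarrow>
          (\<exists>x\<in>E. (\<lambda>k. nrm (\<lambda>i. u k i - x i)) \<longlonglongrightarrow> 0))"

definition dual :: "'k::real_normed_field vec set \<Rightarrow> ('k vec \<Rightarrow> 'k) set" where
  "dual F = {f. (\<forall>x\<in>F. \<forall>y\<in>F. f (\<lambda>i. x i + y i) = f x + f y) \<and>
                (\<forall>c. \<forall>x\<in>F. f (\<lambda>i. c * x i) = c * f x) \<and>
                (\<exists>C. \<forall>x\<in>F. norm (f x) \<le> C * nrm x)}"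

definition opnorm :: "'k::real_normed_field vec set \<Rightarrow> ('k vec \<Rightarrow> 'k) \<Rightarrow> real" where
  "opnorm F f = (SUP x\<in>{x\<in>F. nrm x \<le> 1}. norm (f x))"

definition dual_ball :: "'k::real_normed_field vec set \<Rightarrow> ('k vec \<Rightarrow> 'k) set" where
  "dual_ball F = {f\<in>dual F. opnorm F f \<le> 1}"

definition tuples :: "(nat \<Rightarrow> 'k vec set) \<Rightarrow> nat \<Rightarrow> (nat \<Rightarrow> 'k vec) set" where
  "tuples E k = {x. \<forall>l<k. x l \<in> E l}"

definition multilin :: "(nat \<Rightarrow> 'k::real_normed_field vec set) \<Rightarrow> nat \<Rightarrow> ((nat \<Rightarrow> 'k vec) \<Rightarrow> 'k) \<Rightarrow> bool" where
  "multilin E k A \<longleftrightarrow>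
     (\<forall>x x'. (\<forall>l<k. x l = x' l) \<longrightarrow> A x = A x') \<and>
     (\<forall>x\<in>tuples E k. \<forall>i<k. \<forall>u\<in>E i. \<forall>v\<in>E i.
        A (x(i := (\<lambda>j. u j + v j))) = A (x(i := u)) + A (x(i := v)) \<and>
        (\<forall>c. A (x(i := (\<lambda>j. c * u j))) = c * A (x(i := u))))"

definition epsn :: "(nat \<Rightarrow> 'k::real_normed_field vec set) \<Rightarrow> nat \<Rightarrow> nat \<Rightarrow> (nat \<Rightarrow> nat \<Rightarrow> 'k vec) \<Rightarrow> real" where
  "epsn E k m xs = (SUP \<phi>\<in>{\<phi>. \<forall>l<k. \<phi> l \<in> dual_ball (E l)}.
                      norm (\<Sum>j<m. \<Prod>l<k. \<phi> l (xs j l)))"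

text \<open>L_eps(E_0,...,E_{n-1}; F'): n-linear maps T with values in F' whose linearization
  is continuous for eps_n; C bounds the norm of the linearization.\<close>
definition L_eps_bound :: "(nat \<Rightarrow> 'k::real_normed_field vec set) \<Rightarrow> nat \<Rightarrow> 'k vec set \<Rightarrow>
    ((nat \<Rightarrow> 'k vec) \<Rightarrow> 'k vec \<Rightarrow> 'k) \<Rightarrow> real \<Rightarrow> bool" where
  "L_eps_bound E n F T C \<longleftrightarrow>
     (\<forall>m xs. (\<forall>j<m. xs j \<in> tuples E n) \<longrightarrow>
        opnorm F (\<lambda>y. \<Sum>j<m. T (xs j) y) \<le> C * epsn E n m xs)"

definition L_eps :: "(nat \<Rightarrow> 'k::real_normed_field vec set) \<Rightarrow> nat \<Rightarrow> 'k vec set \<Rightarrow>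
    ((nat \<Rightarrow> 'k vec) \<Rightarrow> 'k vec \<Rightarrow> 'k) set" where
  "L_eps E n F = {T. (\<forall>x x'. (\<forall>l<n. x l = x' l) \<longrightarrow> T x = T x') \<and>
                     (\<forall>x\<in>tuples E n. T x \<in> dual F) \<and>
                     (\<forall>y\<in>F. multilin E n (\<lambda>x. T x y)) \<and>
                     (\<exists>C. \<forall>x\<in>tuples E n. opnorm F (T x) \<le> C * (\<Prod>l<n. nrm (x l))) \<and>
                     (\<exists>C. L_eps_bound E n F T C)}"

definition L_eps_norm :: "(nat \<Rightarrow> 'k::real_normed_field vec set) \<Rightarrow> nat \<Rightarrow> 'k vec set \<Rightarrow>
    ((nat \<Rightarrow> 'k vec) \<Rightarrow> 'k vec \<Rightarrow> 'k) \<Rightarrow> real" where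
  "L_eps_norm E n F T = Inf {C. 0 \<le> C \<and> L_eps_bound E n F T C}"

text \<open>The dual of (E_0 (x) ... (x) E_{k-1}, eps_k), identified with k-linear forms.\<close>
definition eps_dual_bound :: "(nat \<Rightarrow> 'k::real_normed_field vec set) \<Rightarrow> nat \<Rightarrow>
    ((nat \<Rightarrow> 'k vec) \<Rightarrow> 'k) \<Rightarrow> real \<Rightarrow> bool" where
  "eps_dual_bound E k B C \<longleftrightarrow>
     (\<forall>m xs. (\<forall>j<m. xs j \<in> tuples E k) \<longrightarrow>
        norm (\<Sum>j<m. B (xs j)) \<le> C * epsn E k m xs)"

definition eps_dual :: "(nat \<Rightarrow> 'k::real_normed_field vec set) \<Rightarrow> nat \<Rightarrow> ((nat \<Rightarrow> 'k vec) \<Rightarrow> 'k) set" where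
  "eps_dual E k = {B. multilin E k B \<and> (\<exists>C. eps_dual_bound E k B C)}"

definition eps_dual_norm :: "(nat \<Rightarrow> 'k::real_normed_field vec set) \<Rightarrow> nat \<Rightarrow> ((nat \<Rightarrow> 'k vec) \<Rightarrow> 'k) \<Rightarrow> real" where
  "eps_dual_norm E k B = Inf {C. 0 \<le> C \<and> eps_dual_bound E k B C}"

definition canon :: "nat \<Rightarrow> ((nat \<Rightarrow> 'k vec) \<Rightarrow> 'k vec \<Rightarrow> 'k) \<Rightarrow> (nat \<Rightarrow> 'k vec) \<Rightarrow> 'k" where
  "canon n T = (\<lambda>z. T z (z n))"

text \<open>L_eps is represented by eps (over the scalar field 'k): for all n >= 1 and all
  Banach spaces E_0..E_{n-1}, F the canonical map is an isometric isomorphism onto.\<close>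
definition L_eps_represented_by_eps :: "'k::real_normed_field itself \<Rightarrow> bool" where
  "L_eps_represented_by_eps _ \<longleftrightarrow>
     (\<forall>n\<ge>1. \<forall>(E :: nat \<Rightarrow> 'k vec set) (F :: 'k vec set).
        (\<forall>l<n. banach_sub (E l)) \<and> banach_sub F \<longrightarrow>
        (\<forall>T\<in>L_eps E n F.
            canon n T \<in> eps_dual (E(n := F)) (Suc n) \<and>
            eps_dual_norm (E(n := F)) (Suc n) (canon n T) = L_eps_norm E n F T) \<and>
        (\<forall>B\<in>eps_dual (E(n := F)) (Suc n). \<exists>T\<in>L_eps E n F.
            \<forall>z\<in>tuples (E(n := F)) (Suc n). canon n T z = B z))"

end

theory Submission
  imports Defs
begin

definition V2 :: "'k::real_normed_field vec set" where
  "V2 = {x. \<forall>i\<ge>2. x i = 0}"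

lemma V2_iff: "x \<in> V2 \<longleftrightarrow> (\<forall>i\<ge>2. x i = 0)"
  by (simp add: V2_def)

lemma range_V2:
  assumes "x \<in> V2"
  shows "range (\<lambda>i. norm (x i)) = {norm (x 0), norm (x 1), 0}"
proof (rule set_eqI, rule iffI)
  fix r assume "r \<in> range (\<lambda>i. norm (x i))"
  then obtain i where r: "r = norm (x i)" by auto
  show "r \<in> {norm (x 0), norm (x 1), 0}"
  proof (cases "i < 2")
    case True then have "i = 0 \<or> i = 1" by auto
    then show ?thesis using r by auto
  next
    case False then show ?thesis using r assms by (simp add: V2_iff)
  qed
next
  fix r assume "r \<in> {norm (x 0), norm (x 1), 0}"
  moreover have "x 2 = 0" using assms by (simp add: V2_iff)
  ultimately show "r \<in> range (\<lambda>i. norm (x i))"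
    by (auto intro: range_eqI[of _ _ 2] range_eqI[of _ _ 0] range_eqI[of _ _ 1])
qed

lemma nrm_V2:
  assumes "x \<in> V2"
  shows "nrm x = max (norm (x 0)) (norm (x 1))"
proof -
  have "nrm x = Sup {norm (x 0), norm (x 1), 0}"
    unfolding nrm_def using range_V2[OF assms] by simp
  also have "\<dots> = max (norm (x 0)) (norm (x 1))"
    by (simp add: cSup_insert sup_max max_def)
  finally show ?thesis .
qed

lemma nrm_V2_ge: "x \<in> V2 \<Longrightarrow> norm (x i) \<le> nrm x"
  by (cases "i < 2") (auto simp: nrm_V2 V2_iff less_2_cases_iff le_max_iff_disj)

lemma nrm_V2_nonneg: "x \<in> V2 \<Longrightarrow> 0 \<le> nrm x"
  by (simp add: nrm_V2 le_max_iff_disj)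

lemma V2_add: "x \<in> V2 \<Longrightarrow> y \<in> V2 \<Longrightarrow> (\<lambda>i. x i + y i) \<in> V2"
  by (simp add: V2_iff)
lemma V2_diff: "x \<in> V2 \<Longrightarrow> y \<in> V2 \<Longrightarrow> (\<lambda>i. x i - y i) \<in> V2"
  by (simp add: V2_iff)
lemma V2_scale: "x \<in> V2 \<Longrightarrow> (\<lambda>i. c * x i) \<in> V2"
  by (simp add: V2_iff)

lemma banach_V2: "banach_sub (V2 :: 'k::{real_normed_field,banach} vec set)"
  unfolding banach_sub_def
proof (intro conjI ballI allI impI)
  fix x :: "'k vec" assume "x \<in> V2"
  then show "bdd_above (range (\<lambda>i. norm (x i)))"
    using range_V2 by (metis bdd_above_insert bdd_above_empty)
next
  show "(\<lambda>i. 0::'k) \<in> V2" by (simp add: V2_iff)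
next
  fix x y :: "'k vec" assume "x \<in> V2" "y \<in> V2"
  then show "(\<lambda>i. x i + y i) \<in> V2" by (rule V2_add)
next
  fix c :: 'k and x :: "'k vec" assume "x \<in> V2"
  then show "(\<lambda>i. c * x i) \<in> V2" by (rule V2_scale)
next
  fix u :: "nat \<Rightarrow> 'k vec"
  assume a: "(\<forall>k. u k \<in> V2) \<and> (\<forall>e>0. \<exists>N. \<forall>p\<ge>N. \<forall>q\<ge>N. nrm (\<lambda>i. u p i - u q i) < e)"
  have C: "Cauchy (\<lambda>k. u k i)" for i
  proof (rule metric_CauchyI)
    fix e :: real assume "e > 0"
    then obtain N where N: "\<forall>p\<ge>N. \<forall>q\<ge>N. nrm (\<lambda>i. u p i - u q i) < e" using a by blast
    show "\<exists>M. \<forall>m\<ge>M. \<forall>n\<ge>M. dist (u m i) (u n i) < e"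
    proof (intro exI allI impI)
      fix p q assume "N \<le> p" "N \<le> q"
      have "norm ((\<lambda>i. u p i - u q i) i) \<le> nrm (\<lambda>i. u p i - u q i)"
        by (rule nrm_V2_ge) (use a in \<open>simp add: V2_diff\<close>)
      then show "dist (u p i) (u q i) < e" using N \<open>N \<le> p\<close> \<open>N \<le> q\<close>
        by (simp add: dist_norm) (meson le_less_trans)
    qed
  qed
  then have L: "(\<lambda>k. u k i) \<longlonglongrightarrow> lim (\<lambda>k. u k i)" for i
    using Cauchy_convergent_iff convergent_LIMSEQ_iff by blast
  define x where "x = (\<lambda>i. if i < 2 then lim (\<lambda>k. u k i) else (0::'k))"
  have xV: "x \<in> V2" by (simp add: x_def V2_iff)
  have e: "nrm (\<lambda>i. u k i - x i) = max (norm (u k 0 - x 0)) (norm (u k 1 - x 1))" for k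
    by (subst nrm_V2) (use a xV in \<open>auto simp: V2_diff\<close>)
  have t0: "(\<lambda>k. norm (u k 0 - x 0)) \<longlonglongrightarrow> 0"
    using L[of 0] by (simp add: x_def tendsto_norm_zero_iff LIM_zero_iff)
  have t1: "(\<lambda>k. norm (u k 1 - x 1)) \<longlonglongrightarrow> 0"
    using L[of 1] by (simp add: x_def tendsto_norm_zero_iff LIM_zero_iff)
  have "(\<lambda>k. max (norm (u k 0 - x 0)) (norm (u k 1 - x 1))) \<longlonglongrightarrow> max 0 0"
    by (rule tendsto_max[OF t0 t1])
  then have "(\<lambda>k. nrm (\<lambda>i. u k i - x i)) \<longlonglongrightarrow> 0" by (simp add: e)
  then show "\<exists>x\<in>V2. (\<lambda>k. nrm (\<lambda>i. u k i - x i)) \<longlonglongrightarrow> 0" using xV by blast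
qed

lemma zero_V2: "(\<lambda>i. 0) \<in> V2" and nrm_zero: "nrm (\<lambda>i. 0::'k::real_normed_field) = 0"
  by (auto simp: V2_iff nrm_def)

lemma zero_ball: "\<exists>x::'k::real_normed_field vec. x \<in> V2 \<and> nrm x \<le> 1"
  using zero_V2 nrm_zero by (metis order.refl zero_le_one)

definition e0 :: "'k::real_normed_field vec" where "e0 = (\<lambda>i. if i = 0 then 1 else 0)"
definition e1 :: "'k::real_normed_field vec" where "e1 = (\<lambda>i. if i = 1 then 1 else 0)"

lemma e0_V2: "e0 \<in> V2" and e1_V2: "e1 \<in> V2"
  by (auto simp: V2_iff e0_def e1_def)

lemma V2_decomp: "x \<in> V2 \<Longrightarrow> x = (\<lambda>i. (\<lambda>i. x 0 * e0 i) i + (\<lambda>i. x 1 * e1 i) i)"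
  by (rule ext) (auto simp: V2_iff e0_def e1_def less_2_cases_iff not_less[symmetric])

lemma dual_decomp:
  assumes f: "f \<in> dual V2" and x: "x \<in> V2"
  shows "f x = x 0 * f e0 + x 1 * f e1"
proof -
  have "f x = f (\<lambda>i. (\<lambda>i. x 0 * e0 i) i + (\<lambda>i. x 1 * e1 i) i)"
    using V2_decomp[OF x] by simp
  also have "\<dots> = f (\<lambda>i. x 0 * e0 i) + f (\<lambda>i. x 1 * e1 i)"
    using f by (simp add: dual_def V2_scale e0_V2 e1_V2)
  also have "\<dots> = x 0 * f e0 + x 1 * f e1"
    using f by (simp add: dual_def e0_V2 e1_V2)
  finally show ?thesis .
qed

lemma opnorm_upper:
  fixes f :: "'k::real_normed_field vec \<Rightarrow> 'k"
  assumes f: "f \<in> dual V2" and x: "x \<in> V2" "nrm x \<le> 1"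
  shows "norm (f x) \<le> opnorm V2 f"
proof -
  obtain C where C: "\<forall>y\<in>V2. norm (f y) \<le> C * nrm y" using f by (auto simp: dual_def)
  have "bdd_above ((\<lambda>y. norm (f y)) ` {y\<in>V2. nrm y \<le> 1})"
  proof (rule bdd_aboveI2)
    fix y :: "'k vec" assume y: "y \<in> {y\<in>V2. nrm y \<le> 1}"
    then have "norm (f y) \<le> C * nrm y" using C by auto
    also have "\<dots> \<le> max C 0"
      using y nrm_V2_nonneg[of y]
      by (cases "C \<ge> 0") (auto intro: mult_left_le mult_nonpos_nonneg order_trans)
    finally show "norm (f y) \<le> max C 0" .
  qed
  then show ?thesis unfolding opnorm_def using x by (intro cSUP_upper) auto
qed

definition sgnk :: "'k::real_normed_field \<Rightarrow> 'k" where
  "sgnk a = (if a = 0 then 1 else of_real (norm a) / a)"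

lemma sgnk_norm: "norm (sgnk a) = 1"
  by (simp add: sgnk_def norm_divide)

lemma sgnk_mult: "sgnk a * a = of_real (norm a)"
  by (simp add: sgnk_def)

lemma dual_ball_sum:
  fixes f :: "'k::real_normed_field vec \<Rightarrow> 'k"
  assumes f: "f \<in> dual_ball V2"
  shows "norm (f e0) + norm (f e1) \<le> 1"
proof -
  have fd: "f \<in> dual V2" using f by (simp add: dual_ball_def)
  define w where "w = (\<lambda>i. (\<lambda>i. sgnk (f e0) * e0 i) i + (\<lambda>i. sgnk (f e1) * e1 i) i)"
  have wV: "w \<in> V2" unfolding w_def by (intro V2_add V2_scale e0_V2 e1_V2)
  have w0: "w 0 = sgnk (f e0)" and w1: "w 1 = sgnk (f e1)" and w1': "w (Suc 0) = sgnk (f e1)" by (auto simp: w_def e0_def e1_def)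
  have "nrm w = 1" using nrm_V2[OF wV] w1 by (simp add: w0 sgnk_norm)
  have "f w = w 0 * f e0 + w 1 * f e1" by (rule dual_decomp[OF fd wV])
  also have "\<dots> = of_real (norm (f e0) + norm (f e1))" by (simp add: w0 w1' sgnk_mult)
  finally have eq: "norm (f w) = norm (f e0) + norm (f e1)"
    by (metis norm_of_real abs_of_nonneg add_nonneg_nonneg norm_ge_zero)
  have "norm (f w) \<le> opnorm V2 f"
    using opnorm_upper[OF fd wV] \<open>nrm w = 1\<close> by simp
  also have "\<dots> \<le> 1" using f by (simp add: dual_ball_def)
  finally show ?thesis using eq by simp
qed

lemma dual_ball_bound:
  fixes f :: "'k::real_normed_field vec \<Rightarrow> 'k"
  assumes f: "f \<in> dual_ball V2" and x: "x \<in> V2"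
  shows "norm (f x) \<le> nrm x"
proof -
  have fd: "f \<in> dual V2" using f by (simp add: dual_ball_def)
  have "norm (f x) \<le> norm (x 0) * norm (f e0) + norm (x 1) * norm (f e1)"
    using dual_decomp[OF fd x] by (metis norm_mult norm_triangle_ineq)
  also have "\<dots> \<le> nrm x * norm (f e0) + nrm x * norm (f e1)"
    using nrm_V2_ge[OF x] by (intro add_mono mult_right_mono) auto
  also have "\<dots> = nrm x * (norm (f e0) + norm (f e1))" by (simp add: algebra_simps)
  also have "\<dots> \<le> nrm x * 1"
    using dual_ball_sum[OF f] nrm_V2_nonneg[OF x] by (intro mult_left_mono) auto
  finally show ?thesis by simp
qed

lemma ev_dual_ball:
  fixes i :: nat
  shows "(\<lambda>x::'k::real_normed_field vec. x i) \<in> dual_ball V2"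
proof -
  have d: "(\<lambda>x::'k vec. x i) \<in> dual V2"
    unfolding dual_def by (auto intro!: exI[of _ 1] simp: nrm_V2_ge)
  have "opnorm V2 (\<lambda>x::'k vec. x i) \<le> 1"
    unfolding opnorm_def
    by (rule cSUP_least) (use zero_ball in \<open>auto intro: order_trans[OF nrm_V2_ge]\<close>)
  then show ?thesis using d by (simp add: dual_ball_def)
qed

lemma zero_dual_ball: "(\<lambda>x::'k::real_normed_field vec. 0) \<in> dual_ball V2"
proof -
  have d: "(\<lambda>x::'k vec. 0) \<in> dual V2"
    unfolding dual_def by (auto intro!: exI[of _ 0])
  have "opnorm V2 (\<lambda>x::'k vec. 0) \<le> 1"
    unfolding opnorm_def
    by (rule cSUP_least) (use zero_ball in auto)
  then show ?thesis using d by (simp add: dual_ball_def)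
qed

abbreviation EV :: "nat \<Rightarrow> 'k::real_normed_field vec set" where "EV \<equiv> (\<lambda>l. V2)"

lemma epsn_bdd:
  fixes xs :: "nat \<Rightarrow> nat \<Rightarrow> 'k::real_normed_field vec"
  assumes xs: "\<forall>j<m. xs j \<in> tuples EV k"
  shows "bdd_above ((\<lambda>\<phi>. norm (\<Sum>j<m. \<Prod>l<k. \<phi> l (xs j l))) ` {\<phi>. \<forall>l<k. \<phi> l \<in> dual_ball V2})"
proof (rule bdd_aboveI2)
  fix \<phi> :: "nat \<Rightarrow> 'k vec \<Rightarrow> 'k" assume \<phi>: "\<phi> \<in> {\<phi>. \<forall>l<k. \<phi> l \<in> dual_ball V2}"
  have "norm (\<Sum>j<m. \<Prod>l<k. \<phi> l (xs j l)) \<le> (\<Sum>j<m. norm (\<Prod>l<k. \<phi> l (xs j l)))"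
    by (rule norm_sum)
  also have "\<dots> = (\<Sum>j<m. \<Prod>l<k. norm (\<phi> l (xs j l)))" by (simp add: prod_norm)
  also have "\<dots> \<le> (\<Sum>j<m. \<Prod>l<k. nrm (xs j l))"
  proof (rule sum_mono, rule prod_mono)
    fix j l assume "j \<in> {..<m}" "l \<in> {..<k}"
    then have "xs j l \<in> V2" "\<phi> l \<in> dual_ball V2" using xs \<phi> by (auto simp: tuples_def)
    then show "0 \<le> norm (\<phi> l (xs j l)) \<and> norm (\<phi> l (xs j l)) \<le> nrm (xs j l)"
      using dual_ball_bound by auto
  qed
  finally show "norm (\<Sum>j<m. \<Prod>l<k. \<phi> l (xs j l)) \<le> (\<Sum>j<m. \<Prod>l<k. nrm (xs j l))" .
qed

lemma phi_ne: "{\<phi>. \<forall>l<k. \<phi> l \<in> dual_ball (V2::'k::real_normed_field vec set)} \<noteq> {}"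
proof -
  have "(\<lambda>l. \<lambda>x::'k vec. 0::'k) \<in> {\<phi>. \<forall>l<k. \<phi> l \<in> dual_ball (V2::'k vec set)}"
    by (rule CollectI, intro allI impI, rule zero_dual_ball)
  then show ?thesis by (metis empty_iff)
qed

lemma epsn_lower:
  fixes xs :: "nat \<Rightarrow> nat \<Rightarrow> 'k::real_normed_field vec"
  assumes xs: "\<forall>j<m. xs j \<in> tuples EV k" and \<phi>: "\<forall>l<k. \<phi> l \<in> dual_ball V2"
  shows "norm (\<Sum>j<m. \<Prod>l<k. \<phi> l (xs j l)) \<le> epsn EV k m xs"
  unfolding epsn_def using \<phi> by (intro cSUP_upper epsn_bdd[OF xs]) auto

lemma epsn_nonneg:
  fixes xs :: "nat \<Rightarrow> nat \<Rightarrow> 'k::real_normed_field vec"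
  assumes xs: "\<forall>j<m. xs j \<in> tuples EV k"
  shows "0 \<le> epsn EV k m xs"
proof -
  have "norm (\<Sum>j<m. \<Prod>l<k. (\<lambda>l. \<lambda>x. 0::'k) l (xs j l)) \<le> epsn EV k m xs"
    by (rule epsn_lower[OF xs], intro allI impI, rule zero_dual_ball)
  then show ?thesis by (meson norm_ge_zero order_trans)
qed

lemma epsn_upper:
  fixes xs :: "nat \<Rightarrow> nat \<Rightarrow> 'k::real_normed_field vec"
  assumes "\<And>\<phi>. \<forall>l<k. \<phi> l \<in> dual_ball V2 \<Longrightarrow> norm (\<Sum>j<m. \<Prod>l<k. \<phi> l (xs j l)) \<le> M"
  shows "epsn EV k m xs \<le> M"
  unfolding epsn_def using phi_ne assms by (intro cSUP_least) auto

definition Tm :: "(nat \<Rightarrow> 'k::real_normed_field vec) \<Rightarrow> 'k vec \<Rightarrow> 'k" where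
  "Tm x y = x 0 0 * (y 0 + y 1) + x 0 1 * (y 0 - y 1)"

lemma Tm_bound:
  assumes y: "y \<in> V2"
  shows "norm (Tm x y) \<le> 2 * (norm (x 0 0) + norm (x 0 1)) * nrm y"
proof -
  have a: "norm (y 0 + y 1) \<le> 2 * nrm y" "norm (y 0 - y 1) \<le> 2 * nrm y"
    using norm_triangle_ineq[of "y 0" "y 1"] norm_triangle_ineq4[of "y 0" "y 1"]
      nrm_V2_ge[OF y, of 0] nrm_V2_ge[OF y, of 1] by auto
  have "norm (Tm x y) \<le> norm (x 0 0) * norm (y 0 + y 1) + norm (x 0 1) * norm (y 0 - y 1)"
    unfolding Tm_def by (metis norm_mult norm_triangle_ineq)
  also have "\<dots> \<le> norm (x 0 0) * (2 * nrm y) + norm (x 0 1) * (2 * nrm y)"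
    using a by (intro add_mono mult_left_mono) auto
  finally show ?thesis by (simp add: algebra_simps)
qed

lemma Tm_dual:
  fixes x :: "nat \<Rightarrow> 'a::real_normed_field vec"
  shows "Tm x \<in> dual V2"
  unfolding dual_def
proof (intro CollectI conjI ballI allI)
  fix y z :: "'a vec" assume "y \<in> V2" "z \<in> V2"
  show "Tm x (\<lambda>i. y i + z i) = Tm x y + Tm x z" by (simp add: Tm_def algebra_simps)
next
  fix c :: 'a and y :: "'a vec" assume "y \<in> V2"
  show "Tm x (\<lambda>i. c * y i) = c * Tm x y" by (simp add: Tm_def algebra_simps)
next
  show "\<exists>C. \<forall>y\<in>V2. norm (Tm x y) \<le> C * nrm y"
    using Tm_bound by blast
qed

lemma Tm_multilin:
  fixes y :: "'a::real_normed_field vec"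
  shows "multilin EV 1 (\<lambda>x. Tm x y)"
  unfolding multilin_def
proof (intro conjI allI impI ballI)
  fix x x' :: "nat \<Rightarrow> 'a vec" assume "\<forall>l<1. x l = x' l"
  then show "Tm x y = Tm x' y" by (simp add: Tm_def)
next
  fix x :: "nat \<Rightarrow> 'a vec" and i u v assume "i < (1::nat)"
  then have i: "i = 0" by simp
  show "Tm (x(i := \<lambda>j. u j + v j)) y = Tm (x(i := u)) y + Tm (x(i := v)) y"
    by (simp add: i Tm_def algebra_simps)
next
  fix x :: "nat \<Rightarrow> 'a vec" and i u c assume "i < (1::nat)"
  then have i: "i = 0" by simp
  show "Tm (x(i := \<lambda>j. c * u j)) y = c * Tm (x(i := u)) y"
    by (simp add: i Tm_def algebra_simps)
qed

lemma opnorm_le: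
  fixes f :: "'k::real_normed_field vec \<Rightarrow> 'k"
  assumes "\<And>y. y \<in> V2 \<Longrightarrow> nrm y \<le> 1 \<Longrightarrow> norm (f y) \<le> M"
  shows "opnorm V2 f \<le> M"
  unfolding opnorm_def using zero_ball[where 'k='k] assms by (intro cSUP_least) auto

lemma Tm_opnorm:
  fixes x :: "nat \<Rightarrow> 'k::real_normed_field vec"
  assumes x: "x \<in> tuples EV 1"
  shows "opnorm V2 (Tm x) \<le> 4 * (\<Prod>l<1. nrm (x l))"
proof -
  have x0: "x 0 \<in> V2" using x by (simp add: tuples_def)
  have "opnorm V2 (Tm x) \<le> 2 * (norm (x 0 0) + norm (x 0 1))"
  proof (rule opnorm_le)
    fix y :: "'k vec" assume "y \<in> V2" "nrm y \<le> 1"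
    then have "norm (Tm x y) \<le> 2 * (norm (x 0 0) + norm (x 0 1)) * nrm y" using Tm_bound by blast
    also have "\<dots> \<le> 2 * (norm (x 0 0) + norm (x 0 1)) * 1"
      using \<open>nrm y \<le> 1\<close> by (intro mult_left_mono) auto
    finally show "norm (Tm x y) \<le> 2 * (norm (x 0 0) + norm (x 0 1))" by simp
  qed
  also have "\<dots> \<le> 4 * nrm (x 0)"
    using nrm_V2_ge[OF x0, of 0] nrm_V2_ge[OF x0, of 1] by simp
  finally show ?thesis by simp
qed

lemma Tm_Leps_bound:
  fixes dummy :: "'k::real_normed_field"
  assumes H: "\<And>a b::'k. norm a \<le> 1 \<Longrightarrow> norm b \<le> 1 \<Longrightarrow> norm (a + b) + norm (a - b) \<le> 3"
  shows "L_eps_bound (EV::nat \<Rightarrow> 'k vec set) 1 V2 Tm 3"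
  unfolding L_eps_bound_def
proof (intro allI impI)
  fix m and xs :: "nat \<Rightarrow> nat \<Rightarrow> 'k vec" assume xs: "\<forall>j<m. xs j \<in> tuples EV 1"
  define s0 where "s0 = (\<Sum>j<m. xs j 0 0)"
  define s1 where "s1 = (\<Sum>j<m. xs j 0 1)"
  have eq: "(\<Sum>j<m. Tm (xs j) y) = s0 * (y 0 + y 1) + s1 * (y 0 - y 1)" for y
    by (simp add: Tm_def s0_def s1_def sum.distrib sum_distrib_right)
  have "norm (\<Sum>j<m. \<Prod>l<1. (\<lambda>l. \<lambda>x::'k vec. x 0) l (xs j l)) \<le> epsn EV 1 m xs"
    by (rule epsn_lower[OF xs], intro allI impI, rule ev_dual_ball)
  then have n0: "norm s0 \<le> epsn EV 1 m xs" by (simp add: s0_def)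
  have "norm (\<Sum>j<m. \<Prod>l<1. (\<lambda>l. \<lambda>x::'k vec. x 1) l (xs j l)) \<le> epsn EV 1 m xs"
    by (rule epsn_lower[OF xs], intro allI impI, rule ev_dual_ball)
  then have n1: "norm s1 \<le> epsn EV 1 m xs" by (simp add: s1_def)
  define M where "M = max (norm s0) (norm s1)"
  have "opnorm V2 (\<lambda>y. \<Sum>j<m. Tm (xs j) y) \<le> 3 * M"
  proof (rule opnorm_le)
    fix y :: "'k vec" assume y: "y \<in> V2" "nrm y \<le> 1"
    have y01: "norm (y 0) \<le> 1" "norm (y 1) \<le> 1"
      using nrm_V2_ge[OF y(1), of 0] nrm_V2_ge[OF y(1), of 1] y(2) by auto
    have "norm (s0 * (y 0 + y 1) + s1 * (y 0 - y 1)) \<le> norm s0 * norm (y 0 + y 1) + norm s1 * norm (y 0 - y 1)"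
      by (metis norm_mult norm_triangle_ineq)
    also have "\<dots> \<le> M * norm (y 0 + y 1) + M * norm (y 0 - y 1)"
      unfolding M_def by (intro add_mono mult_right_mono) auto
    also have "\<dots> = M * (norm (y 0 + y 1) + norm (y 0 - y 1))" by (simp add: algebra_simps)
    also have "\<dots> \<le> M * 3"
      using H[OF y01] by (intro mult_left_mono) (auto simp: M_def le_max_iff_disj)
    finally show "norm (\<Sum>j<m. Tm (xs j) y) \<le> 3 * M" by (simp add: eq mult.commute)
  qed
  also have "\<dots> \<le> 3 * epsn EV 1 m xs" using n0 n1 by (simp add: M_def)
  finally show "opnorm V2 (\<lambda>y. \<Sum>j<m. Tm (xs j) y) \<le> 3 * epsn EV 1 m xs" .
qed

lemma Tm_L_eps:
  fixes dummy :: "'k::real_normed_field"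
  assumes H: "\<And>a b::'k. norm a \<le> 1 \<Longrightarrow> norm b \<le> 1 \<Longrightarrow> norm (a + b) + norm (a - b) \<le> 3"
  shows "(Tm :: (nat \<Rightarrow> 'k vec) \<Rightarrow> 'k vec \<Rightarrow> 'k) \<in> L_eps EV 1 V2"
  unfolding L_eps_def
proof (intro CollectI conjI allI impI ballI)
  fix x x' :: "nat \<Rightarrow> 'k vec" assume "\<forall>l<1. x l = x' l"
  then show "Tm x = Tm x'" by (simp add: Tm_def fun_eq_iff)
next
  fix x :: "nat \<Rightarrow> 'k vec" show "Tm x \<in> dual V2" by (rule Tm_dual)
next
  fix y :: "'k vec" show "multilin EV 1 (\<lambda>x. Tm x y)" by (rule Tm_multilin)
next
  show "\<exists>C. \<forall>x\<in>tuples EV 1. opnorm V2 (Tm x) \<le> C * (\<Prod>l<1. nrm ((x::nat \<Rightarrow> 'k vec) l))"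
    using Tm_opnorm by blast
next
  have "L_eps_bound EV 1 V2 (Tm :: (nat \<Rightarrow> 'k vec) \<Rightarrow> 'k vec \<Rightarrow> 'k) 3"
    by (rule Tm_Leps_bound) (rule H; assumption)
  then show "\<exists>C. L_eps_bound EV 1 V2 (Tm :: (nat \<Rightarrow> 'k vec) \<Rightarrow> 'k vec \<Rightarrow> 'k) C" by blast
qed

lemma L_eps_norm_le:
  fixes dummy :: "'k::real_normed_field"
  assumes H: "\<And>a b::'k. norm a \<le> 1 \<Longrightarrow> norm b \<le> 1 \<Longrightarrow> norm (a + b) + norm (a - b) \<le> 3"
  shows "L_eps_norm EV 1 V2 (Tm :: (nat \<Rightarrow> 'k vec) \<Rightarrow> 'k vec \<Rightarrow> 'k) \<le> 3"
proof -
  have "L_eps_bound EV 1 V2 (Tm :: (nat \<Rightarrow> 'k vec) \<Rightarrow> 'k vec \<Rightarrow> 'k) 3"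
    by (rule Tm_Leps_bound) (rule H; assumption)
  then show ?thesis unfolding L_eps_norm_def
    by (intro cInf_lower) (auto intro: bdd_belowI[of _ 0])
qed

definition ne1 :: "'k::real_normed_field vec" where "ne1 = (\<lambda>i. -1 * e1 i)"

definition xsT :: "nat \<Rightarrow> nat \<Rightarrow> 'k::real_normed_field vec" where
  "xsT j l = (if l = 0 then (if j = 0 then e0 else if j = 1 then e0 else if j = 2 then e1 else ne1)
              else (if j = 0 then e0 else if j = 1 then e1 else if j = 2 then e0 else e1))"

lemma ne1_V2: "ne1 \<in> V2" unfolding ne1_def by (intro V2_scale e1_V2)

lemma xsT_tuples: "\<forall>j<m. (xsT j :: nat \<Rightarrow> 'k::real_normed_field vec) \<in> tuples EV k"
  by (auto simp: tuples_def xsT_def e0_V2 e1_V2 ne1_V2)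

lemma sum4: "(\<Sum>j<(4::nat). f j) = f 0 + f 1 + f 2 + (f 3 :: 'a::comm_monoid_add)"
  by (simp add: eval_nat_numeral add.assoc)

lemma prod2: "(\<Prod>l<(2::nat). f l) = f 0 * (f 1 :: 'a::comm_monoid_mult)"
  by (simp add: eval_nat_numeral)

lemma canon_sum: "(\<Sum>j<4. canon 1 Tm (xsT j)) = (4 :: 'k::real_normed_field)"
  by (simp add: sum4 canon_def Tm_def xsT_def e0_def e1_def ne1_def)

lemma epsn_xsT: "epsn EV 2 4 (xsT :: nat \<Rightarrow> nat \<Rightarrow> 'k::real_normed_field vec) \<le> 1"
proof (rule epsn_upper)
  fix \<phi> :: "nat \<Rightarrow> 'k vec \<Rightarrow> 'k" assume \<phi>: "\<forall>l<2. \<phi> l \<in> dual_ball V2"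
  have p0: "\<phi> 0 \<in> dual_ball V2" and p1: "\<phi> 1 \<in> dual_ball V2" using \<phi> by auto
  have d0: "\<phi> 0 \<in> dual V2" using p0 by (simp add: dual_ball_def)
  define a0 a1 b0 b1 where "a0 = \<phi> 0 e0" "a1 = \<phi> 0 e1" "b0 = \<phi> 1 e0" "b1 = \<phi> 1 e1"
  have n1: "\<phi> 0 ne1 = - a1"
    using dual_decomp[OF d0 ne1_V2] by (simp add: a0_a1_b0_b1_def ne1_def e1_def)
  have "(\<Sum>j<4. \<Prod>l<2. \<phi> l (xsT j l)) = a0 * b0 + a0 * b1 + a1 * b0 + (- a1) * b1"
    by (simp add: sum4 prod2 xsT_def a0_a1_b0_b1_def n1)
  then have "norm (\<Sum>j<4. \<Prod>l<2. \<phi> l (xsT j l)) \<le> norm a0 * norm b0 + norm a0 * norm b1 + norm a1 * norm b0 + norm a1 * norm b1"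
  proof -
    assume e: "(\<Sum>j<4. \<Prod>l<2. \<phi> l (xsT j l)) = a0 * b0 + a0 * b1 + a1 * b0 + (- a1) * b1"
    have "norm (a0 * b0 + a0 * b1 + a1 * b0 + (- a1) * b1) \<le> norm (a0 * b0 + a0 * b1 + a1 * b0) + norm ((- a1) * b1)"
      by (rule norm_triangle_ineq)
    also have "\<dots> \<le> norm (a0 * b0 + a0 * b1) + norm (a1 * b0) + norm ((- a1) * b1)"
      using norm_triangle_ineq by simp
    also have "\<dots> \<le> norm (a0 * b0) + norm (a0 * b1) + norm (a1 * b0) + norm ((- a1) * b1)"
      using norm_triangle_ineq by simp
    finally show ?thesis using e by (simp add: norm_mult)
  qed
  also have "\<dots> = (norm a0 + norm a1) * (norm b0 + norm b1)" by (simp add: algebra_simps)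
  also have "\<dots> \<le> 1 * 1"
    using dual_ball_sum[OF p0] dual_ball_sum[OF p1]
    by (intro mult_mono) (auto simp: a0_a1_b0_b1_def)
  finally show "norm (\<Sum>j<4. \<Prod>l<2. \<phi> l (xsT j l)) \<le> 1" by simp
qed

lemma eps_dual_norm_ge:
  assumes mem: "(canon 1 Tm :: (nat \<Rightarrow> 'k::real_normed_field vec) \<Rightarrow> 'k) \<in> eps_dual EV 2"
  shows "4 \<le> eps_dual_norm EV 2 (canon 1 Tm :: (nat \<Rightarrow> 'k vec) \<Rightarrow> 'k)"
proof -
  let ?B = "canon 1 Tm :: (nat \<Rightarrow> 'k vec) \<Rightarrow> 'k"
  obtain C where C: "eps_dual_bound EV 2 ?B C" using mem by (auto simp: eps_dual_def)
  have "eps_dual_bound EV 2 ?B (max C 0)"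
    unfolding eps_dual_bound_def
  proof (intro allI impI)
    fix m and xs :: "nat \<Rightarrow> nat \<Rightarrow> 'k vec" assume xs: "\<forall>j<m. xs j \<in> tuples EV 2"
    have "norm (\<Sum>j<m. ?B (xs j)) \<le> C * epsn EV 2 m xs"
      using C xs by (simp add: eps_dual_bound_def)
    also have "\<dots> \<le> max C 0 * epsn EV 2 m xs"
      using epsn_nonneg[OF xs] by (intro mult_right_mono) auto
    finally show "norm (\<Sum>j<m. ?B (xs j)) \<le> max C 0 * epsn EV 2 m xs" .
  qed
  then have ne: "{C. 0 \<le> C \<and> eps_dual_bound EV 2 ?B C} \<noteq> {}" by force
  show ?thesis unfolding eps_dual_norm_def
  proof (rule cInf_greatest[OF ne])
    fix D assume D: "D \<in> {C. 0 \<le> C \<and> eps_dual_bound EV 2 ?B C}"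
    have "norm (\<Sum>j<4. ?B (xsT j)) \<le> D * epsn EV 2 4 (xsT :: nat \<Rightarrow> nat \<Rightarrow> 'k vec)"
      using D xsT_tuples[of 4 2] unfolding eps_dual_bound_def by blast
    also have "\<dots> \<le> D * 1" using D epsn_xsT by (intro mult_left_mono) auto
    finally show "4 \<le> D" using canon_sum[where 'k='k] by simp
  qed
qed

lemma main_k:
  fixes dummy :: "'k::{real_normed_field,banach}"
  assumes H: "\<And>a b::'k. norm a \<le> 1 \<Longrightarrow> norm b \<le> 1 \<Longrightarrow> norm (a + b) + norm (a - b) \<le> 3"
  shows "\<not> L_eps_represented_by_eps TYPE('k)"
proof
  assume R: "L_eps_represented_by_eps TYPE('k)"
  have TL: "(Tm :: (nat \<Rightarrow> 'k vec) \<Rightarrow> 'k vec \<Rightarrow> 'k) \<in> L_eps EV 1 V2"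
    by (rule Tm_L_eps) (rule H; assumption)
  have bs: "(\<forall>l<1. banach_sub ((EV::nat \<Rightarrow> 'k vec set) l)) \<and> banach_sub (V2::'k vec set)"
    using banach_V2 by auto
  have upd: "(EV::nat \<Rightarrow> 'k vec set)(1 := V2) = EV" by (rule ext) simp
  have s2: "Suc 1 = (2::nat)" by simp
  have X: "\<forall>n\<ge>1. \<forall>(E :: nat \<Rightarrow> 'k vec set) (F :: 'k vec set).
        (\<forall>l<n. banach_sub (E l)) \<and> banach_sub F \<longrightarrow>
        (\<forall>T\<in>L_eps E n F.
            canon n T \<in> eps_dual (E(n := F)) (Suc n) \<and>
            eps_dual_norm (E(n := F)) (Suc n) (canon n T) = L_eps_norm E n F T) \<and>
        (\<forall>B\<in>eps_dual (E(n := F)) (Suc n). \<exists>T\<in>L_eps E n F.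
            \<forall>z\<in>tuples (E(n := F)) (Suc n). canon n T z = B z)"
      using R unfolding L_eps_represented_by_eps_def .
  note R' = conjunct1[OF mp[OF spec[OF spec[OF mp[OF spec[OF X, of 1] order_refl], of EV], of V2] bs]]
  note R2 = bspec[OF R' TL]
  note mem = conjunct1[OF R2, unfolded upd s2]
  note eqn = conjunct2[OF R2, unfolded upd s2]
  have "4 \<le> L_eps_norm EV 1 V2 (Tm :: (nat \<Rightarrow> 'k vec) \<Rightarrow> 'k vec \<Rightarrow> 'k)"
    using eps_dual_norm_ge[OF mem] eqn by simp
  moreover have "L_eps_norm EV 1 V2 (Tm :: (nat \<Rightarrow> 'k vec) \<Rightarrow> 'k vec \<Rightarrow> 'k) \<le> 3"
    by (rule L_eps_norm_le) (rule H; assumption)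
  ultimately show False by simp
qed

lemma H_real: "norm (a::real) \<le> 1 \<Longrightarrow> norm b \<le> 1 \<Longrightarrow> norm (a + b) + norm (a - b) \<le> 3"
  unfolding real_norm_def by arith

lemma H_complex:
  fixes a b :: complex
  assumes "norm a \<le> 1" "norm b \<le> 1"
  shows "norm (a + b) + norm (a - b) \<le> 3"
proof -
  define p q where "p = norm (a + b)" "q = norm (a - b)"
  have par: "p^2 + q^2 = 2 * (norm a ^ 2 + norm b ^ 2)"
    unfolding p_q_def cmod_power2 by (simp add: power2_eq_square algebra_simps)
  have "norm a ^ 2 \<le> 1" "norm b ^ 2 \<le> 1"
    using assms by (simp_all add: power_le_one)
  then have "p^2 + q^2 \<le> 4" using par by simp
  moreover have "0 \<le> (p - q)^2" by simp
  ultimately have "(p + q)^2 \<le> 3^2" by (simp add: power2_eq_square algebra_simps)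
  then have "p + q \<le> 3" by (rule power2_le_imp_le) simp
  then show ?thesis by (simp add: p_q_def)
qed

theorem proposition2p7:
  shows "\<not> L_eps_represented_by_eps TYPE(real) \<and> \<not> L_eps_represented_by_eps TYPE(complex)"
proof
  show "\<not> L_eps_represented_by_eps TYPE(real)"
    by (rule main_k) (rule H_real)
  show "\<not> L_eps_represented_by_eps TYPE(complex)"
    by (rule main_k) (rule H_complex)
qed

end
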